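(* Let $f:\mathbb{R}^n\to(-\infty,+\infty]$ be proper, lower semicontinuous and prox-bounded with threshold $\lambda_f>0$, let $0<\lambda<\lambda_f$ and let $x\in\operatorname{dom}f$. Then the following are equivalent: (a) $P_\lambda f(x)$ is a singleton; (b) $e_\lambda f$ is strictly differentiable at $x$; (c) $(\lambda f+j)^*$ is (strictly) differentiable at $x$; (d) there exists $u\in P_\lambda f(x)$ such that $\lambda f+j$ is essentially strongly convex at $u$ for $x$. When one of these holds, $P_\lambda f(x)=\{\nabla(\lambda f+j)^*(x)\}$.
   Context: $j:=\frac12\|\cdot\|^2$; $g^*$ denotes the Legendre–Fenchel conjugate. $e_\lambda f(x):=\inf_y\{f(y)+\frac1{2\lambda}\|y-x\|^2\}$, $P_\lambda f(x):=\operatorname{argmin}_y\{f(y)+\frac1{2\lambda}\|y-x\|^2\}$; prox-bounded with threshold $\lambda_f=\sup\{\lambda>0:e_\lambda f(x)>-\infty\text{ for some }x\}$. Let $\Gamma_0$ be the class of proper lsc convex $\psi:[0,\infty)\to[0,\infty]$ with $\psi(t)=0$ iff $t=0$. A proper lsc $g$ is essentially strongly convex at $u\in\operatorname{dom}g$ for $x\in\mathbb{R}^n$ if there is $\psi\in\Gamma_0$ with $g(y)\ge g(u)+\langle y-u,x\rangle+\psi(\|y-u\|)$ for all $y\in\mathbb{R}^n$. *)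

theory Defs
  imports "HOL-Analysis.Analysis"
begin

text \<open>Extended-real-valued functions on a Euclidean space: values in (-inf,+inf] are
  encoded as ereal values different from -inf.\<close>

definition proper_fun :: "('a \<Rightarrow> ereal) \<Rightarrow> bool" where
  "proper_fun f \<longleftrightarrow> (\<forall>x. f x \<noteq> -\<infinity>) \<and> (\<exists>x. f x < \<infinity>)"

definition edom :: "('a \<Rightarrow> ereal) \<Rightarrow> 'a set" where
  "edom f = {x. f x < \<infinity>}"

definition lsc :: "('a::topological_space \<Rightarrow> ereal) \<Rightarrow> bool" where
  "lsc f \<longleftrightarrow> (\<forall>x. f x \<le> Liminf (at x) f)"

definition moreau_env :: "real \<Rightarrow> ('a::real_normed_vector \<Rightarrow> ereal) \<Rightarrow> 'a \<Rightarrow> ereal" where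
  "moreau_env lam f x = (INF y. f y + ereal (norm (y - x) ^ 2 / (2 * lam)))"

definition prox_map :: "real \<Rightarrow> ('a::real_normed_vector \<Rightarrow> ereal) \<Rightarrow> 'a \<Rightarrow> 'a set" where
  "prox_map lam f x = {y. \<forall>z. f y + ereal (norm (y - x) ^ 2 / (2 * lam))
                               \<le> f z + ereal (norm (z - x) ^ 2 / (2 * lam))}"

definition prox_bounded :: "('a::real_normed_vector \<Rightarrow> ereal) \<Rightarrow> bool" where
  "prox_bounded f \<longleftrightarrow> (\<exists>lam>0. \<exists>x. moreau_env lam f x > -\<infinity>)"

definition prox_threshold :: "('a::real_normed_vector \<Rightarrow> ereal) \<Rightarrow> ereal" where
  "prox_threshold f = Sup {ereal lam | lam. lam > 0 \<and> (\<exists>x. moreau_env lam f x > -\<infinity>)}"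

definition jfun :: "'a::real_normed_vector \<Rightarrow> ereal" where
  "jfun x = ereal (norm x ^ 2 / 2)"

definition fconj :: "('a::real_inner \<Rightarrow> ereal) \<Rightarrow> 'a \<Rightarrow> ereal" where
  "fconj g x = (SUP y. ereal (inner x y) - g y)"

definition strictly_differentiable ::
    "('a::real_normed_vector \<Rightarrow> 'b::real_normed_vector) \<Rightarrow> 'a \<Rightarrow> bool" where
  "strictly_differentiable F x \<longleftrightarrow>
     (\<exists>D. bounded_linear D \<and>
        ((\<lambda>p. (F (fst p) - F (snd p) - D (fst p - snd p)) /\<^sub>R norm (fst p - snd p))
           \<longlongrightarrow> 0) (at (x, x) within {p. fst p \<noteq> snd p}))"

text \<open>The class Gamma_0: proper lsc convex psi : [0,inf) -> [0,inf] with psi t = 0 iff t = 0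
  (only the values on [0,inf) are relevant).\<close>
definition Gamma0 :: "(real \<Rightarrow> ereal) \<Rightarrow> bool" where
  "Gamma0 psi \<longleftrightarrow>
     (\<forall>t\<ge>0. psi t \<ge> 0) \<and>
     (\<forall>t\<ge>0. psi t = 0 \<longleftrightarrow> t = 0) \<and>
     (\<forall>a\<ge>0. \<forall>b\<ge>0. \<forall>\<theta>\<in>{0..1}.
        psi (\<theta> * a + (1 - \<theta>) * b) \<le> ereal \<theta> * psi a + ereal (1 - \<theta>) * psi b) \<and>
     (\<forall>t\<ge>0. psi t \<le> Liminf (at t within {0..}) psi)"

definition ess_strongly_convex_at :: "('a::real_inner \<Rightarrow> ereal) \<Rightarrow> 'a \<Rightarrow> 'a \<Rightarrow> bool" where
  "ess_strongly_convex_at g u x \<longleftrightarrow>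
     u \<in> edom g \<and>
     (\<exists>psi. Gamma0 psi \<and> (\<forall>y. g y \<ge> g u + ereal (inner (y - u) x) + psi (norm (y - u))))"

end

theory Submission
  imports Defs "HOL-Analysis.Analysis"
begin


definition lscN :: "('a::topological_space \<Rightarrow> ereal) \<Rightarrow> bool" where
  "lscN F \<longleftrightarrow> (\<forall>y c. c < F y \<longrightarrow> (\<forall>\<^sub>F z in nhds y. c < F z))"

lemma eventually_at_nhds: "eventually P (at y) \<Longrightarrow> P y \<Longrightarrow> eventually P (nhds y)"
  by (auto simp: eventually_at_filter elim: eventually_mono)

lemma lsc_imp_lscN: assumes "lsc F" shows "lscN F"
  unfolding lscN_def
proof (intro allI impI)
  fix y c assume c: "c < F y"
  have "F y \<le> Liminf (at y) F" using assms by (simp add: lsc_def)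
  then have "\<forall>\<^sub>F z in at y. c < F z" using c by (simp add: le_Liminf_iff)
  then show "\<forall>\<^sub>F z in nhds y. c < F z" using c by (rule eventually_at_nhds)
qed

lemma lscN_attains_min:
  fixes F :: "'a::topological_space \<Rightarrow> ereal"
  assumes "lscN F" "compact K" "K \<noteq> {}"
  shows "\<exists>y\<in>K. \<forall>z\<in>K. F y \<le> F z"
proof -
  define m where "m = (INF z\<in>K. F z)"
  define Fam where "Fam = (\<lambda>t. {z. F z \<le> t}) ` {t. m < t}"
  have cl: "closed T" if TF: "T \<in> Fam" for T
  proof -
    obtain t where T: "T = {z. F z \<le> t}" using TF unfolding Fam_def by blast
    have "open {z. t < F z}"
    proof (rule open_subopen[THEN iffD2], rule ballI)
      fix y assume "y \<in> {z. t < F z}"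
      then have "\<forall>\<^sub>F z in nhds y. t < F z" using assms(1) lscN_def by auto
      then obtain S where "open S" "y \<in> S" "\<forall>z\<in>S. t < F z" by (auto simp: eventually_nhds)
      then show "\<exists>T. open T \<and> y \<in> T \<and> T \<subseteq> {z. t < F z}" by auto
    qed
    then have "closed (- {z. t < F z})" by (simp add: closed_Compl)
    moreover have "- {z. t < F z} = T" unfolding T by (auto simp: not_less)
    ultimately show ?thesis by simp
  qed
  have fip: "K \<inter> \<Inter>F' \<noteq> {}" if FF: "finite F'" "F' \<subseteq> Fam" for F'
  proof -
    obtain C where C: "C \<subseteq> {t. m < t}" "finite C" "F' = (\<lambda>t. {z. F z \<le> t}) ` C"
      using finite_subset_image[OF FF(1) FF(2)[unfolded Fam_def]] by blast
    show ?thesis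
    proof (cases "C = {}")
      case True then show ?thesis using C assms(3) by auto
    next
      case False
      define t0 where "t0 = Min C"
      have "t0 \<in> C" using False C t0_def by auto
      then have "m < t0" using C by auto
      then obtain z where z: "z \<in> K" "F z < t0" unfolding m_def INF_less_iff by blast
      have "\<forall>t\<in>C. F z \<le> t"
      proof
        fix t assume "t \<in> C"
        then have "t0 \<le> t" unfolding t0_def using C(2) by (rule Min_le[rotated])
        then show "F z \<le> t" using z(2) by simp
      qed
      then show ?thesis using z C by auto
    qed
  qed
  have "K \<inter> \<Inter>Fam \<noteq> {}" by (rule compact_imp_fip[OF assms(2)]) (use cl fip in auto)
  then obtain y where y: "y \<in> K" "\<forall>T\<in>Fam. y \<in> T" by auto
  have "F y \<le> m"
  proof (rule dense_ge)
    fix t assume "m < t"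
    then have "{z. F z \<le> t} \<in> Fam" unfolding Fam_def by blast
    then have "y \<in> {z. F z \<le> t}" by (rule bspec[OF y(2)])
    then show "F y \<le> t" by simp
  qed
  moreover have "m \<le> F z" if "z \<in> K" for z unfolding m_def by (rule INF_lower[OF that])
  ultimately show ?thesis using y(1) by (meson order_trans)
qed

lemma lscN_comb:
  fixes F :: "'a::metric_space \<Rightarrow> ereal" and k :: "'a \<Rightarrow> real"
  assumes "lscN F" "\<And>y. isCont k y" "lam > 0" "\<And>y. F y \<noteq> -\<infinity>"
  shows "lscN (\<lambda>y. ereal lam * F y + ereal (k y))"
  unfolding lscN_def
proof (intro allI impI)
  fix y c assume c: "c < ereal lam * F y + ereal (k y)"
  obtain r where r: "c < ereal r" "ereal r < ereal lam * F y + ereal (k y)"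
    using ereal_dense2[OF c] by blast
  have "ereal ((r - k y)/lam) < F y"
    proof (cases "F y")
    case (real s)
    then have "r - k y < lam * s" using r(2) by simp
    then show ?thesis using real assms(3) by (simp add: pos_divide_less_eq mult.commute)
  next
    case PInf then show ?thesis by simp
  next
    case MInf then show ?thesis using assms(4)[of y] by simp
  qed
  then obtain e where e: "ereal ((r - k y)/lam) < ereal e" "ereal e < F y"
    using ereal_dense2 by blast
  have re: "r < lam * e + k y" using e(1) assms(3) by (simp add: pos_divide_less_eq mult.commute)
  define d where "d = lam * e + k y - r"
  have d: "d > 0" using re d_def by simp
  have ev1: "\<forall>\<^sub>F z in nhds y. ereal e < F z" using e(2) assms(1) lscN_def by auto
  have "(k \<longlongrightarrow> k y) (at y)" using assms(2) isCont_def by blast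
  then have ev0: "\<forall>\<^sub>F z in at y. k y - d < k z" using d by (intro order_tendstoD(1)) auto
  have ev2: "\<forall>\<^sub>F z in nhds y. k y - d < k z" by (rule eventually_at_nhds[OF ev0]) (simp add: d)
  show "\<forall>\<^sub>F z in nhds y. c < ereal lam * F z + ereal (k z)"
    using ev1 ev2
  proof eventually_elim
    case (elim z)
    have "ereal r < ereal lam * F z + ereal (k z)"
    proof (cases "F z")
      case (real s)
      have "lam * e < lam * s" using elim(1) real assms(3) by simp
      then show ?thesis using real elim(2) d_def by simp
    next
      case PInf then show ?thesis using assms(3) by simp
    next
      case MInf then show ?thesis using assms(4) by simp
    qed
    then show ?case by (rule less_trans[OF r(1)])
  qed
qed



lemma norm_diff_sq: "norm (u - z)^2 = norm u ^2 - 2 * inner z u + norm (z::'a::real_inner) ^2"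
  by (simp add: power2_norm_eq_inner inner_diff_left inner_diff_right inner_commute)

lemma norm_add_sq: "norm (u + z)^2 = norm u ^2 + 2 * inner u z + norm (z::'a::real_inner) ^2"
  by (simp add: power2_norm_eq_inner inner_add_left inner_add_right inner_commute)

lemma quad_dom:
  fixes a p q :: real assumes "a > 0"
  obtains T where "T > 0" "\<forall>t\<ge>T. p * t + q \<le> a * t^2"
proof
  define T where "T = max 1 ((\<bar>p\<bar> + \<bar>q\<bar>)/a)"
  show "T > 0" unfolding T_def by simp
  show "\<forall>t\<ge>T. p * t + q \<le> a * t^2"
  proof (intro allI impI)
    fix t assume t: "T \<le> t"
    have t1: "1 \<le> t" using t unfolding T_def by simp
    have "(\<bar>p\<bar> + \<bar>q\<bar>)/a \<le> t" using t unfolding T_def by simp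
    then have at: "\<bar>p\<bar> + \<bar>q\<bar> \<le> a * t" using assms by (simp add: pos_divide_le_eq mult.commute)
    have "p * t + q \<le> \<bar>p\<bar> * t + \<bar>q\<bar> * t"
    proof -
      have "p * t \<le> \<bar>p\<bar> * t" using t1 by (intro mult_right_mono) auto
      moreover have "q \<le> \<bar>q\<bar> * t"
      proof -
        have "\<bar>q\<bar> * 1 \<le> \<bar>q\<bar> * t" using t1 by (intro mult_left_mono) auto
        then show ?thesis using abs_ge_self[of q] by linarith
      qed
      ultimately show ?thesis by simp
    qed
    also have "\<dots> = (\<bar>p\<bar> + \<bar>q\<bar>) * t" by (simp add: algebra_simps)
    also have "\<dots> \<le> (a * t) * t" using at t1 by (intro mult_right_mono) auto
    also have "\<dots> = a * t^2" by (simp add: power2_eq_square)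
    finally show "p * t + q \<le> a * t^2" .
  qed
qed

locale proxsetup =
  fixes f :: "'a::euclidean_space \<Rightarrow> ereal" and lam :: real
  assumes proper: "proper_fun f" and lscf: "lsc f" and lam_pos: "0 < lam"
    and thr: "ereal lam < prox_threshold f"
begin

definition G where "G = (\<lambda>y. ereal lam * f y + jfun y)"
definition H where "H z y = ereal lam * f y + ereal (norm y ^ 2 / 2 - inner z y)"
definition Pm where "Pm z = {u. \<forall>y. H z u \<le> H z y}"
definition phi where "phi z = real_of_ereal (fconj G z)"
definition fr where "fr y = real_of_ereal (f y)"

lemma fnm: "f y \<noteq> -\<infinity>" using proper by (auto simp: proper_fun_def)

lemma f_cases:
  obtains (inf) "f y = \<infinity>" | (fin) "f y = ereal (fr y)"
  using fnm[of y] by (cases "f y") (auto simp: fr_def)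

lemma H_fin: "f y = ereal (fr y) \<Longrightarrow> H z y = ereal (lam * fr y + norm y ^ 2 / 2 - inner z y)"
  by (simp add: H_def)
lemma G_fin: "f y = ereal (fr y) \<Longrightarrow> G y = ereal (lam * fr y + norm y ^ 2 / 2)"
  by (simp add: G_def jfun_def)
lemma H_inf: "f y = \<infinity> \<Longrightarrow> H z y = \<infinity>"
  using lam_pos by (simp add: H_def)
lemma G_inf: "f y = \<infinity> \<Longrightarrow> G y = \<infinity>"
  using lam_pos by (simp add: G_def jfun_def)

lemma H_nm: "H z y \<noteq> -\<infinity>"
  by (cases y rule: f_cases) (auto simp: H_fin H_inf)

lemma H_le_iff: "ereal c \<le> H z y \<longleftrightarrow> ereal (c + inner z y) \<le> G y"
  by (cases y rule: f_cases) (auto simp: H_fin H_inf G_fin G_inf algebra_simps)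

lemma H_shift: "H z y = H x y + ereal (inner (x - z) y)"
  by (cases y rule: f_cases) (auto simp: H_fin H_inf inner_diff_left algebra_simps)

lemma conj_term: "ereal (inner z y) - G y = - H z y"
  by (cases y rule: f_cases) (auto simp: H_fin H_inf G_fin G_inf algebra_simps)

lemma prox_eq: "prox_map lam f z = Pm z"
proof -
  have key: "f u + ereal (norm (u - z) ^ 2 / (2 * lam)) \<le> f y + ereal (norm (y - z) ^ 2 / (2 * lam))
     \<longleftrightarrow> H z u \<le> H z y" for u y
  proof (cases u rule: f_cases)
    case inf then show ?thesis by (cases y rule: f_cases) (auto simp: H_inf H_fin)
  next
    case fin note fu = fin
    show ?thesis
    proof (cases y rule: f_cases)
      case inf then show ?thesis using fu by (simp add: H_inf H_fin)
    next
      case fin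
      have id: "lam * (fr w + norm (w - z) ^ 2 / (2 * lam)) = (lam * fr w + norm w ^ 2 / 2 - inner z w) + norm z ^ 2 / 2" for w
        using lam_pos by (simp add: norm_diff_sq field_simps)
      have "fr u + norm (u - z) ^ 2 / (2 * lam) \<le> fr y + norm (y - z) ^ 2 / (2 * lam) \<longleftrightarrow>
            lam * (fr u + norm (u - z) ^ 2 / (2 * lam)) \<le> lam * (fr y + norm (y - z) ^ 2 / (2 * lam))"
        using lam_pos by simp
      also have "\<dots> \<longleftrightarrow> lam * fr u + norm u ^ 2 / 2 - inner z u \<le> lam * fr y + norm y ^ 2 / 2 - inner z y"
        unfolding id by simp
      finally show ?thesis using fu fin by (simp add: H_fin)
    qed
  qed
  show ?thesis unfolding prox_map_def Pm_def using key by blast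
qed

end


context proxsetup begin

lemma coercive_base:
  obtains r M x' where "0 < r" "r < 1"
    "\<And>y. ereal (lam * M - r/2 * norm (y - x')^2 + norm y^2/2) \<le> G y"
proof -
  have "ereal lam < Sup {ereal l | l. l > 0 \<and> (\<exists>x. moreau_env l f x > -\<infinity>)}"
    using thr by (simp add: prox_threshold_def)
  then obtain l x' where l: "l > 0" "lam < l" "moreau_env l f x' > -\<infinity>"
    by (auto simp: less_Sup_iff)
  obtain M where M: "ereal M < moreau_env l f x'" using ereal_dense2[OF l(3)] by blast
  define r where "r = lam / l"
  have r: "0 < r" "r < 1" using l lam_pos by (auto simp: r_def)
  show ?thesis
  proof (rule that[OF r])
    fix y
    have *: "ereal M < f y + ereal (norm (y - x')^2 / (2 * l))"
      using M unfolding moreau_env_def by (rule less_INF_D) simp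
    show "ereal (lam * M - r/2 * norm (y - x')^2 + norm y^2/2) \<le> G y"
    proof (cases y rule: f_cases)
      case inf then show ?thesis by (simp add: G_inf)
    next
      case fin
      have "M < fr y + norm (y - x')^2 / (2 * l)" using * fin by simp
      then have "lam * M < lam * (fr y + norm (y - x')^2 / (2 * l))" using lam_pos by simp
      also have "\<dots> = lam * fr y + r/2 * norm (y-x')^2" using l by (simp add: r_def field_simps)
      finally show ?thesis using fin by (simp add: G_fin)
    qed
  qed
qed

lemma coercive:
  obtains a where "a > 0" "\<And>v z. \<exists>B C. \<forall>w. ereal (a * norm w ^ 2 - B * norm w - C) \<le> H z (v + w)"
proof -
  obtain r M x' where r: "0 < r" "r < 1"
    and Q: "\<And>y. ereal (lam * M - r/2 * norm (y - x')^2 + norm y^2/2) \<le> G y"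
    using coercive_base by blast
  show ?thesis
  proof (rule that[of "(1 - r)/2"])
    show "(1 - r)/2 > 0" using r by simp
    fix v z
    define p where "p = v - r *\<^sub>R (v - x') - z"
    define C where "C = - (lam * M - r/2 * norm (v - x')^2 + norm v^2/2 - inner z v)"
    have "ereal ((1 - r)/2 * norm w ^ 2 - norm p * norm w - C) \<le> H z (v + w)" for w
    proof -
      have e1: "norm (v + w - x')^2 = norm w^2 + 2 * inner w (v - x') + norm (v - x')^2"
        using norm_add_sq[of w "v - x'"] by (simp add: algebra_simps)
      have e2: "norm (v + w)^2 = norm w^2 + 2 * inner w v + norm v^2"
        using norm_add_sq[of w v] by (simp add: algebra_simps)
      have e3: "inner z (v + w) = inner z v + inner w z" by (simp add: inner_add_right inner_commute)
      have e4: "inner w p = inner w v - r * inner w (v - x') - inner w z"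
        by (simp add: p_def inner_diff_right)
      have cs1: "\<bar>inner w p\<bar> \<le> norm p * norm w" using Cauchy_Schwarz_ineq2[of w p] by (simp add: mult.commute)
      have cs: "- (norm p * norm w) \<le> inner w p" using cs1 by linarith
      have eq: "(lam * M - r/2 * norm (v + w - x')^2 + norm (v + w)^2/2 - inner z (v + w))
          - ((1 - r)/2 * norm w ^ 2 - norm p * norm w - C) = inner w p + norm p * norm w"
        unfolding e1 e2 e3 e4 C_def by (simp add: field_simps)
      have "(1 - r)/2 * norm w ^ 2 - norm p * norm w - C + inner z (v + w)
            \<le> lam * M - r/2 * norm (v + w - x')^2 + norm (v + w)^2/2"
        using eq cs by linarith
      then have "ereal ((1 - r)/2 * norm w ^ 2 - norm p * norm w - C + inner z (v + w))
         \<le> ereal (lam * M - r/2 * norm (v + w - x')^2 + norm (v + w)^2/2)" by (simp only: ereal_less_eq)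
      then have "ereal ((1 - r)/2 * norm w ^ 2 - norm p * norm w - C + inner z (v + w)) \<le> G (v + w)"
        by (rule order_trans[OF _ Q[of "v + w"]])
      then show ?thesis by (simp add: H_le_iff)
    qed
    then show "\<exists>B C. \<forall>w. ereal ((1 - r)/2 * norm w ^ 2 - B * norm w - C) \<le> H z (v + w)" by blast
  qed
qed

lemma C1: "\<exists>T>0. \<forall>y. T \<le> norm (y - v) \<longrightarrow> ereal (hv + K * norm (y - v)) \<le> H x y"
proof -
  obtain a where a: "a > 0" "\<And>v z. \<exists>B C. \<forall>w. ereal (a * norm w ^ 2 - B * norm w - C) \<le> H z (v + w)"
    using coercive by blast
  obtain B C where BC: "\<forall>w. ereal (a * norm w ^ 2 - B * norm w - C) \<le> H x (v + w)" using a(2) by blast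
  obtain T where T: "T > 0" "\<forall>t\<ge>T. (K + B) * t + (hv + C) \<le> a * t^2"
    using quad_dom[OF a(1)] by blast
  show ?thesis
  proof (intro exI[of _ T] conjI allI impI)
    show "T > 0" by fact
    fix y assume y: "T \<le> norm (y - v)"
    have h: "(K + B) * norm (y - v) + (hv + C) \<le> a * norm (y - v)^2" using T(2) y by blast
    have "hv + K * norm (y - v) \<le> a * norm (y - v) ^ 2 - B * norm (y - v) - C"
      using h by (simp add: algebra_simps)
    then have "ereal (hv + K * norm (y - v)) \<le> ereal (a * norm (y - v) ^ 2 - B * norm (y - v) - C)"
      by simp
    also have "\<dots> \<le> H x y" using BC[rule_format, of "y - v"] by simp
    finally show "ereal (hv + K * norm (y - v)) \<le> H x y" .
  qed
qed

lemma lscN_H: "lscN (H z)"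
proof -
  have "H z = (\<lambda>y. ereal lam * f y + ereal (norm y^2/2 - inner z y))"
    by (rule ext) (simp add: H_def)
  moreover have "lscN (\<lambda>y. ereal lam * f y + ereal (norm y^2/2 - inner z y))"
    by (rule lscN_comb[OF lsc_imp_lscN[OF lscf] _ lam_pos fnm]) (auto intro!: continuous_intros)
  ultimately show ?thesis by simp
qed

lemma dom_pt: obtains y0 where "f y0 = ereal (fr y0)"
proof -
  obtain y0 where y0: "f y0 < \<infinity>" using proper by (auto simp: proper_fun_def)
  show ?thesis by (rule that[of y0]) (cases y0 rule: f_cases, use y0 in auto)
qed

lemma Pm_ne: "\<exists>u. u \<in> Pm z"
proof -
  obtain y0 where fy0: "f y0 = ereal (fr y0)" by (rule dom_pt)
  define h0 where "h0 = lam * fr y0 + norm y0 ^ 2 / 2 - inner z y0"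
  have Hy0: "H z y0 = ereal h0" using fy0 by (simp add: H_fin h0_def)
  obtain T where T: "T > 0" "\<forall>y. T \<le> norm (y - 0) \<longrightarrow> ereal (h0 + 1 + 0 * norm (y - 0)) \<le> H z y"
    using C1[where v=0 and hv="h0 + 1" and K=0 and x=z] by blast
  define R where "R = max T (norm y0)"
  have ne: "cball (0::'a) R \<noteq> {}" using T(1) by (simp add: R_def)
  obtain u where u: "u \<in> cball 0 R" "\<forall>y\<in>cball 0 R. H z u \<le> H z y"
    using lscN_attains_min[OF lscN_H compact_cball ne] by blast
  have "u \<in> Pm z" unfolding Pm_def
  proof (intro CollectI allI)
    fix y show "H z u \<le> H z y"
    proof (cases "norm y \<le> R")
      case True then show ?thesis using u(2) by simp
    next
      case False
      then have "T \<le> norm y" by (simp add: R_def)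
      then have a: "ereal (h0 + 1) \<le> H z y" using T(2) by auto
      have "y0 \<in> cball 0 R" by (simp add: R_def)
      then have b: "H z u \<le> ereal h0" using u(2) Hy0 by metis
      have c: "ereal h0 \<le> ereal (h0 + 1)" by simp
      show ?thesis by (rule order_trans[OF order_trans[OF b c] a])
    qed
  qed
  then show ?thesis by blast
qed

lemma Pm_fin: assumes "u \<in> Pm z" shows "f u = ereal (fr u)"
proof (cases u rule: f_cases)
  case inf
  obtain y0 where fy0: "f y0 = ereal (fr y0)" by (rule dom_pt)
  have "H z u \<le> H z y0" using assms by (simp add: Pm_def)
  then show ?thesis using inf fy0 by (simp add: H_inf H_fin)
qed

lemma conj_eq: assumes "u \<in> Pm z" shows "fconj G z = - H z u"
proof -
  have "fconj G z = (SUP y. - H z y)" by (simp add: fconj_def conj_term)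
  also have "\<dots> = - H z u"
  proof (rule antisym)
    show "(SUP y. - H z y) \<le> - H z u"
      using assms by (intro SUP_least) (simp add: Pm_def)
    show "- H z u \<le> (SUP y. - H z y)" by (rule SUP_upper) simp
  qed
  finally show ?thesis .
qed

lemma phi_eq: assumes "u \<in> Pm z" shows "phi z = -(lam * fr u + norm u^2/2 - inner z u)"
  using conj_eq[OF assms] Pm_fin[OF assms] by (simp add: phi_def H_fin)

lemma subgrad: assumes "u \<in> Pm z" shows "phi z + inner (w - z) u \<le> phi w"
proof -
  obtain u' where u': "u' \<in> Pm w" using Pm_ne by blast
  have "H w u' \<le> H w u" using u' by (simp add: Pm_def)
  then have "lam * fr u' + norm u'^2/2 - inner w u' \<le> lam * fr u + norm u^2/2 - inner w u"
    using Pm_fin[OF u'] Pm_fin[OF assms] by (simp add: H_fin)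
  then show ?thesis using phi_eq[OF assms] phi_eq[OF u'] by (simp add: inner_diff_left)
qed

end


definition sdq :: "('a::real_normed_vector \<Rightarrow> real) \<Rightarrow> ('a \<Rightarrow> real) \<Rightarrow> 'a \<times> 'a \<Rightarrow> real" where
  "sdq F D p = (F (fst p) - F (snd p) - D (fst p - snd p)) /\<^sub>R norm (fst p - snd p)"

definition sd :: "('a::real_normed_vector \<Rightarrow> real) \<Rightarrow> ('a \<Rightarrow> real) \<Rightarrow> 'a \<Rightarrow> bool" where
  "sd F D x \<longleftrightarrow> bounded_linear D \<and> (sdq F D \<longlongrightarrow> 0) (at (x, x) within {p. fst p \<noteq> snd p})"

lemma strict_sd: "strictly_differentiable F x \<longleftrightarrow> (\<exists>D. sd F D x)"
  unfolding strictly_differentiable_def sd_def sdq_def[abs_def] by (rule refl)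

lemma sd_has_derivative: assumes "sd F D x" shows "(F has_derivative D) (at x)"
proof -
  have lim: "filterlim (\<lambda>y. (y, x)) (at (x, x) within {p. fst p \<noteq> snd p}) (at x)"
    unfolding filterlim_at
  proof
    show "\<forall>\<^sub>F y in at x. (y, x) \<in> {p. fst p \<noteq> snd p} \<and> (y, x) \<noteq> (x, x)"
      by (simp add: eventually_at_filter)
    show "((\<lambda>y. (y, x)) \<longlongrightarrow> (x, x)) (at x)" by (intro tendsto_intros)
  qed
  have t: "(sdq F D \<longlongrightarrow> 0) (at (x, x) within {p. fst p \<noteq> snd p})" using assms by (simp add: sd_def)
  have "((\<lambda>y. sdq F D (y, x)) \<longlongrightarrow> 0) (at x)"
    using filterlim_compose[OF t lim] .
  then show ?thesis using assms by (simp add: has_derivative_at_within sdq_def sd_def)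
qed

lemma sd_intro:
  fixes F :: "'a::real_normed_vector \<Rightarrow> real"
  assumes bl: "bounded_linear D"
    and bound: "\<And>e. e > 0 \<Longrightarrow> \<exists>d>0. \<forall>z w. z \<noteq> w \<longrightarrow> dist z x < d \<longrightarrow> dist w x < d \<longrightarrow>
                 \<bar>F z - F w - D (z - w)\<bar> \<le> e * norm (z - w)"
  shows "sd F D x"
  unfolding sd_def
proof (intro conjI bl tendstoI)
  fix e :: real assume e: "e > 0"
  obtain d where d: "d > 0" "\<forall>z w. z \<noteq> w \<longrightarrow> dist z x < d \<longrightarrow> dist w x < d \<longrightarrow>
                 \<bar>F z - F w - D (z - w)\<bar> \<le> e/2 * norm (z - w)"
    using bound[of "e/2"] e by auto
  show "\<forall>\<^sub>F p in at (x, x) within {p. fst p \<noteq> snd p}. dist (sdq F D p) 0 < e"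
    unfolding eventually_at
  proof (intro exI[of _ d] conjI ballI impI d(1))
    fix p :: "'a \<times> 'a" assume p: "p \<in> {p. fst p \<noteq> snd p}" and pd: "p \<noteq> (x, x) \<and> dist p (x, x) < d"
    obtain z w where pzw: "p = (z, w)" by (cases p)
    have zw: "z \<noteq> w" using p pzw by simp
    have dz: "dist z x < d" using pd pzw dist_fst_le[of p "(x,x)"] by simp
    have dw: "dist w x < d" using pd pzw dist_snd_le[of p "(x,x)"] by simp
    have N: "\<bar>F z - F w - D (z - w)\<bar> \<le> e/2 * norm (z - w)" using d(2) zw dz dw by blast
    have n: "norm (z - w) > 0" using zw by simp
    have "dist (sdq F D p) 0 = \<bar>F z - F w - D (z - w)\<bar> / norm (z - w)"
      by (simp add: sdq_def pzw divide_inverse abs_mult mult.commute)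
    also have "\<dots> \<le> e/2" using N n by (simp add: pos_divide_le_eq)
    also have "\<dots> < e" using e by simp
    finally show "dist (sdq F D p) 0 < e" .
  qed
qed

lemma sd_lin:
  assumes "sd F D1 x" "sd K D2 x"
  shows "sd (\<lambda>z. a * F z + b * K z) (\<lambda>h. a * D1 h + b * D2 h) x"
proof -
  have bl: "bounded_linear (\<lambda>h. a * D1 h + b * D2 h)" using assms unfolding sd_def
    by (intro bounded_linear_add bounded_linear_const_mult) auto
  have eq: "sdq (\<lambda>z. a * F z + b * K z) (\<lambda>h. a * D1 h + b * D2 h) = (\<lambda>p. a * sdq F D1 p + b * sdq K D2 p)"
    by (rule ext) (simp add: sdq_def algebra_simps)
  have "((\<lambda>p. a * sdq F D1 p + b * sdq K D2 p) \<longlongrightarrow> a * 0 + b * 0) (at (x,x) within {p. fst p \<noteq> snd p})"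
    using assms unfolding sd_def by (intro tendsto_intros) auto
  then show ?thesis using bl eq by (simp add: sd_def)
qed

lemma sd_j: "sd (\<lambda>z. norm z ^ 2 / 2) (\<lambda>h. inner x h) (x::'a::real_inner)"
proof (rule sd_intro)
  show "bounded_linear (\<lambda>h. inner x h)" by (rule bounded_linear_inner_right)
  fix e :: real assume e: "e > 0"
  show "\<exists>d>0. \<forall>z w. z \<noteq> w \<longrightarrow> dist z x < d \<longrightarrow> dist w x < d \<longrightarrow>
      \<bar>norm z ^ 2 / 2 - norm w ^ 2 / 2 - inner x (z - w)\<bar> \<le> e * norm (z - w)"
  proof (intro exI[of _ e] conjI allI impI e)
    fix z w assume zw: "z \<noteq> w" and dz: "dist z x < e" and dw: "dist w x < e"
    have id: "norm z ^ 2 / 2 - norm w ^ 2 / 2 - inner x (z - w) = (inner (z - x) (z - w) + inner (w - x) (z - w)) / 2"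
      by (simp add: power2_norm_eq_inner inner_diff_left inner_diff_right inner_commute field_simps)
    have c1: "\<bar>inner (z - x) (z - w)\<bar> \<le> norm (z - x) * norm (z - w)" by (rule Cauchy_Schwarz_ineq2)
    have c2: "\<bar>inner (w - x) (z - w)\<bar> \<le> norm (w - x) * norm (z - w)" by (rule Cauchy_Schwarz_ineq2)
    have m1: "norm (z - x) * norm (z - w) \<le> e * norm (z - w)"
      using dz by (intro mult_right_mono) (auto simp: dist_norm)
    have m2: "norm (w - x) * norm (z - w) \<le> e * norm (z - w)"
      using dw by (intro mult_right_mono) (auto simp: dist_norm)
    show "\<bar>norm z ^ 2 / 2 - norm w ^ 2 / 2 - inner x (z - w)\<bar> \<le> e * norm (z - w)"
      unfolding id using c1 c2 m1 m2 by (simp add: abs_le_iff) linarith?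
  qed
qed



context proxsetup begin

lemma diff_single: assumes "(\<lambda>z. phi z) differentiable (at x)" shows "\<exists>p. Pm x = {p}"
proof -
  obtain D where D: "((\<lambda>z. phi z) has_derivative D) (at x)" using assms by (auto simp: differentiable_def)
  have Du: "D h = inner h u" if u: "u \<in> Pm x" for u h
  proof -
    have d2: "((\<lambda>z. phi z - inner z u) has_derivative (\<lambda>h. D h - inner h u)) (at x)"
      by (intro has_derivative_diff D bounded_linear_imp_has_derivative bounded_linear_inner_left)
    have "\<forall>z. phi x - inner x u \<le> phi z - inner z u"
    proof
      fix z have "phi x + inner (z - x) u \<le> phi z" by (rule subgrad[OF u])
      then show "phi x - inner x u \<le> phi z - inner z u" by (simp add: inner_diff_left)
    qed
    then have "\<forall>\<^sub>F z in at x. phi x - inner x u \<le> phi z - inner z u" by (rule always_eventually)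
    from has_derivative_local_min[OF d2 this] have "(\<lambda>h. D h - inner h u) = (\<lambda>h. 0)" .
    then have "D h - inner h u = 0" by (rule fun_cong)
    then show ?thesis by simp
  qed
  obtain u where u: "u \<in> Pm x" using Pm_ne by blast
  have "Pm x = {u}"
  proof
    show "Pm x \<subseteq> {u}"
    proof
      fix w assume w: "w \<in> Pm x"
      have "inner (w - u) w = inner (w - u) u" using Du[OF w] Du[OF u] by simp
      then have "inner (w - u) (w - u) = 0" by (simp add: inner_diff_right)
      then show "w \<in> {u}" by simp
    qed
    show "{u} \<subseteq> Pm x" using u by simp
  qed
  then show ?thesis by blast
qed

lemma C2: assumes "Pm x = {v}" "H x v = ereal hv" "s > 0"
  shows "\<exists>\<mu>>0. \<forall>y. s \<le> norm (y - v) \<longrightarrow> ereal (hv + \<mu>) \<le> H x y"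
proof -
  obtain T where T: "T > 0" "\<forall>y. T \<le> norm (y - v) \<longrightarrow> ereal (hv + 1 * norm (y - v)) \<le> H x y"
    using C1[where v=v and hv=hv and K=1 and x=x] by blast
  define R where "R = max T s"
  define Ks where "Ks = cball v R - ball v s"
  obtain b :: 'a where b: "b \<in> Basis" using nonempty_Basis by blast
  have nb: "norm (s *\<^sub>R b) = s" using b assms(3) by simp
  have "v + s *\<^sub>R b \<in> Ks" using nb by (simp add: Ks_def R_def dist_norm)
  then have ne: "Ks \<noteq> {}" by blast
  have cK: "compact Ks" unfolding Ks_def by (intro compact_diff compact_cball open_ball)
  obtain ys where ys: "ys \<in> Ks" "\<forall>y\<in>Ks. H x ys \<le> H x y"
    using lscN_attains_min[OF lscN_H cK ne] by blast
  have "ys \<noteq> v" using ys(1) assms(3) by (auto simp: Ks_def)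
  then have "ys \<notin> Pm x" using assms(1) by blast
  then obtain w where w: "H x w < H x ys" by (auto simp: Pm_def not_le)
  have "H x v \<le> H x w" using assms(1) by (auto simp: Pm_def)
  then have "ereal hv < H x ys" using assms(2) w by simp
  then obtain e where e: "ereal hv < ereal e" "ereal e < H x ys" using ereal_dense2 by blast
  define \<mu> where "\<mu> = min (e - hv) s"
  have mu: "\<mu> > 0" using e(1) assms(3) by (simp add: \<mu>_def)
  show ?thesis
  proof (intro exI[of _ \<mu>] conjI allI impI mu)
    fix y assume y: "s \<le> norm (y - v)"
    show "ereal (hv + \<mu>) \<le> H x y"
    proof (cases "norm (y - v) \<le> R")
      case True
      then have "y \<in> Ks" using y by (simp add: Ks_def dist_norm norm_minus_commute)
      then have a: "H x ys \<le> H x y" using ys(2) by blast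
      have b: "ereal (hv + \<mu>) \<le> ereal e" by (simp add: \<mu>_def)
      show ?thesis by (rule order_trans[OF order_trans[OF b less_imp_le[OF e(2)]] a])
    next
      case False
      then have "T \<le> norm (y - v)" by (simp add: R_def)
      then have a: "ereal (hv + 1 * norm (y - v)) \<le> H x y" using T(2) by blast
      have b: "ereal (hv + \<mu>) \<le> ereal (hv + 1 * norm (y - v))" using y by (simp add: \<mu>_def)
      show ?thesis by (rule order_trans[OF b a])
    qed
  qed
qed

lemma key: assumes "Pm x = {v}" "\<epsilon> > 0"
  shows "\<exists>\<delta>>0. \<forall>z u. norm (z - x) < \<delta> \<longrightarrow> u \<in> Pm z \<longrightarrow> norm (u - v) < \<epsilon>"
proof -
  have vP: "v \<in> Pm x" using assms(1) by simp
  define hv where "hv = lam * fr v + norm v^2/2 - inner x v"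
  have Hv: "H x v = ereal hv" using Pm_fin[OF vP] by (simp add: H_fin hv_def)
  obtain T where T: "T > 0" "\<forall>y. T \<le> norm (y - v) \<longrightarrow> ereal (hv + 2 * norm (y - v)) \<le> H x y"
    using C1[where v=v and hv=hv and K=2 and x=x] by blast
  obtain \<mu> where mu: "\<mu> > 0" "\<forall>y. \<epsilon> \<le> norm (y - v) \<longrightarrow> ereal (hv + \<mu>) \<le> H x y"
    using C2[OF assms(1) Hv assms(2)] by blast
  define \<delta> where "\<delta> = min 1 (\<mu> / T)"
  have dpos: "\<delta> > 0" using mu T by (simp add: \<delta>_def)
  show ?thesis
  proof (intro exI[of _ \<delta>] conjI allI impI dpos)
    fix z u assume z: "norm (z - x) < \<delta>" and u: "u \<in> Pm z"
    have up: "H z u \<le> H z v" using u by (simp add: Pm_def)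
    have bound: "c \<le> norm (z - x) * norm (u - v)" if c: "ereal (hv + c) \<le> H x u" for c
    proof -
      have "H x u + ereal (inner (x - z) u) \<le> H x v + ereal (inner (x - z) v)"
        using up by (simp add: H_shift[where z=z and x=x])
      then have "hv + c + inner (x - z) u \<le> hv + inner (x - z) v"
        using c Hv by (cases "H x u") auto
      then have "c \<le> inner (z - x) (u - v)" by (simp add: inner_diff_left inner_diff_right)
      also have "\<dots> \<le> norm (z - x) * norm (u - v)" by (rule norm_cauchy_schwarz)
      finally show ?thesis .
    qed
    show "norm (u - v) < \<epsilon>"
    proof (rule ccontr)
      assume "\<not> norm (u - v) < \<epsilon>"
      then have "\<epsilon> \<le> norm (u - v)" by simp
      then have m: "\<mu> \<le> norm (z - x) * norm (u - v)" using mu(2) bound by blast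
      show False
      proof (cases "T \<le> norm (u - v)")
        case True
        then have a: "2 * norm (u - v) \<le> norm (z - x) * norm (u - v)" using T(2) bound by blast
        have b: "norm (z - x) * norm (u - v) \<le> 1 * norm (u - v)"
          using z by (intro mult_right_mono) (auto simp: \<delta>_def)
        have "norm (u - v) > 0" using True T(1) by linarith
        then show False using a b by linarith
      next
        case False
        have "norm (z - x) * norm (u - v) \<le> norm (z - x) * T" using False by (intro mult_left_mono) auto
        also have "\<dots> < (\<mu> / T) * T" using z T(1) by (intro mult_strict_right_mono) (auto simp: \<delta>_def)
        also have "\<dots> = \<mu>" using T(1) by simp
        finally show False using m by linarith
      qed
    qed
  qed
qed

lemma strict_phi: assumes "Pm x = {v}" shows "sd phi (\<lambda>h. inner v h) x"
proof (rule sd_intro)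
  show "bounded_linear (\<lambda>h. inner v h)" by (rule bounded_linear_inner_right)
  fix e :: real assume e: "e > 0"
  obtain \<delta> where d: "\<delta> > 0" "\<forall>z u. norm (z - x) < \<delta> \<longrightarrow> u \<in> Pm z \<longrightarrow> norm (u - v) < e"
    using key[OF assms e] by blast
  show "\<exists>d>0. \<forall>z w. z \<noteq> w \<longrightarrow> dist z x < d \<longrightarrow> dist w x < d \<longrightarrow>
      \<bar>phi z - phi w - inner v (z - w)\<bar> \<le> e * norm (z - w)"
  proof (intro exI[of _ \<delta>] conjI allI impI d(1))
    fix z w assume zw: "z \<noteq> w" and dz: "dist z x < \<delta>" and dw: "dist w x < \<delta>"
    obtain uz where uz: "uz \<in> Pm z" using Pm_ne by blast
    obtain uw where uw: "uw \<in> Pm w" using Pm_ne by blast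
    have nz: "norm (uz - v) < e" using d(2) dz uz by (simp add: dist_norm)
    have nw: "norm (uw - v) < e" using d(2) dw uw by (simp add: dist_norm)
    have s1: "phi z + inner (w - z) uz \<le> phi w" by (rule subgrad[OF uz])
    have s2: "phi w + inner (z - w) uw \<le> phi z" by (rule subgrad[OF uw])
    have a1: "inner (w - z) uz = - inner (z - w) uz" by (simp add: inner_diff_left)
    have a2: "inner v (z - w) = inner (z - w) v" by (rule inner_commute)
    have a3: "inner (z - w) (uz - v) = inner (z - w) uz - inner (z - w) v" by (rule inner_diff_right)
    have a4: "inner (z - w) (uw - v) = inner (z - w) uw - inner (z - w) v" by (rule inner_diff_right)
    have c1: "\<bar>inner (z - w) (uz - v)\<bar> \<le> norm (z - w) * norm (uz - v)" by (rule Cauchy_Schwarz_ineq2)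
    have c2: "\<bar>inner (z - w) (uw - v)\<bar> \<le> norm (z - w) * norm (uw - v)" by (rule Cauchy_Schwarz_ineq2)
    have m1: "norm (z - w) * norm (uz - v) \<le> norm (z - w) * e" using nz by (intro mult_left_mono) auto
    have m2: "norm (z - w) * norm (uw - v) \<le> norm (z - w) * e" using nw by (intro mult_left_mono) auto
    show "\<bar>phi z - phi w - inner v (z - w)\<bar> \<le> e * norm (z - w)"
      using s1 s2 a1 a2 a3 a4 c1 c2 m1 m2 by (simp add: abs_le_iff mult.commute) linarith?
  qed
qed

lemma esc_single: assumes u: "u \<in> Pm x" and esc: "ess_strongly_convex_at G u x" shows "Pm x = {u}"
proof -
  obtain psi where psi: "Gamma0 psi" "\<forall>y. G u + ereal (inner (y - u) x) + psi (norm (y - u)) \<le> G y"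
    using esc by (auto simp: ess_strongly_convex_at_def)
  have "w = u" if w: "w \<in> Pm x" for w
  proof -
    have fu: "f u = ereal (fr u)" by (rule Pm_fin[OF u])
    have fw: "f w = ereal (fr w)" by (rule Pm_fin[OF w])
    have "H x w \<le> H x u" using w by (simp add: Pm_def)
    then have r: "lam * fr w + norm w^2/2 - inner x w \<le> lam * fr u + norm u^2/2 - inner x u"
      using fu fw by (simp add: H_fin)
    have "ereal (lam * fr u + norm u^2/2) + ereal (inner (w - u) x) + psi (norm (w - u))
           \<le> ereal (lam * fr w + norm w^2/2)"
      using psi(2)[rule_format, of w] fu fw by (simp add: G_fin)
    then have "ereal (lam * fr u + norm u^2/2 + inner (w - u) x) + psi (norm (w - u))
           \<le> ereal (lam * fr w + norm w^2/2)" by simp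
    moreover have iw: "inner (w - u) x = inner x w - inner x u"
      by (metis inner_commute inner_diff_right)
    moreover have p0: "psi (norm (w - u)) \<ge> 0" using psi(1) by (simp add: Gamma0_def)
    ultimately have "psi (norm (w - u)) \<le> 0"
      using r iw by (cases "psi (norm (w - u))") auto
    then have "psi (norm (w - u)) = 0" using p0 by simp
    then have "norm (w - u) = 0" using psi(1) by (simp add: Gamma0_def)
    then show ?thesis by simp
  qed
  then show ?thesis using u by blast
qed

end


context proxsetup begin

lemma single_esc: assumes P: "Pm x = {v}" shows "ess_strongly_convex_at G v x"
proof -
  have vP: "v \<in> Pm x" using P by simp
  have fv: "f v = ereal (fr v)" by (rule Pm_fin[OF vP])
  define hv where "hv = lam * fr v + norm v^2/2 - inner x v"
  have Hv: "H x v = ereal hv" using fv by (simp add: H_fin hv_def)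
  have hvle: "ereal hv \<le> H x y" for y using vP Hv by (auto simp: Pm_def)
  define Adm where "Adm = {p :: real \<times> real. \<forall>y. ereal (hv + fst p * norm (y - v) + snd p) \<le> H x y}"
  define psi where "psi = (\<lambda>t. SUP p\<in>Adm. ereal (fst p * t + snd p))"
  have psi_eq: "psi t = (SUP p\<in>Adm. ereal (fst p * t + snd p))" for t by (simp add: psi_def)
  have adm0: "(0, 0) \<in> Adm" using hvle by (simp add: Adm_def)
  have psi_upper: "ereal (fst p * t + snd p) \<le> psi t" if "p \<in> Adm" for p t
    unfolding psi_eq by (rule SUP_upper[OF that])
  have psi_ge: "0 \<le> psi t" for t using psi_upper[OF adm0, of t] by (simp add: zero_ereal_def)
  have psi0: "psi 0 = 0"
  proof (rule antisym[OF _ psi_ge])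
    show "psi 0 \<le> 0" unfolding psi_eq
    proof (rule SUP_least)
      fix p assume "p \<in> Adm"
      then have A: "\<forall>y. ereal (hv + fst p * norm (y - v) + snd p) \<le> H x y" by (simp add: Adm_def)
      have "ereal (hv + fst p * norm (v - v) + snd p) \<le> H x v" using A by blast
      then show "ereal (fst p * 0 + snd p) \<le> 0" using Hv by simp
    qed
  qed
  obtain T where T: "T > 0" "\<forall>y. T \<le> norm (y - v) \<longrightarrow> ereal (hv + 1 * norm (y - v)) \<le> H x y"
    using C1[where v=v and hv=hv and K=1 and x=x] by blast
  have psi_pos: "0 < psi t" if t: "t > 0" for t
  proof -
    have t2: "t/2 > 0" using t by simp
    obtain \<mu> where mu: "\<mu> > 0" "\<forall>y. t/2 \<le> norm (y - v) \<longrightarrow> ereal (hv + \<mu>) \<le> H x y"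
      using C2[OF P Hv t2] by blast
    define \<alpha> where "\<alpha> = min 1 (\<mu> / T)"
    have al: "\<alpha> > 0" "\<alpha> \<le> 1" using mu T(1) by (auto simp: \<alpha>_def)
    have alT: "\<alpha> * T \<le> \<mu>"
    proof -
      have "\<alpha> \<le> \<mu> / T" by (simp add: \<alpha>_def)
      then show ?thesis using T(1) by (simp add: pos_le_divide_eq)
    qed
    have at2: "0 \<le> \<alpha> * (t/2)" using al t by simp
    have "(\<alpha>, - \<alpha> * (t/2)) \<in> Adm" unfolding Adm_def
    proof (intro CollectI allI)
      fix y
      define d where "d = norm (y - v)"
      have goal: "ereal (hv + \<alpha> * d - \<alpha> * (t/2)) \<le> H x y"
      proof (cases "d < t/2")
        case True
        have "\<alpha> * d \<le> \<alpha> * (t/2)" using True al by (intro mult_left_mono) auto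
        then have "ereal (hv + \<alpha> * d - \<alpha> * (t/2)) \<le> ereal hv" by simp
        also have "\<dots> \<le> H x y" by (rule hvle)
        finally show ?thesis .
      next
        case False
        show ?thesis
        proof (cases "T \<le> d")
          case True
          have "\<alpha> * d \<le> 1 * d" using al d_def by (intro mult_right_mono) auto
          then have "ereal (hv + \<alpha> * d - \<alpha> * (t/2)) \<le> ereal (hv + 1 * d)" using at2 by simp
          also have "\<dots> \<le> H x y" using T(2) True d_def by blast
          finally show ?thesis .
        next
          case F2: False
          have "\<alpha> * d \<le> \<alpha> * T" using F2 al by (intro mult_left_mono) auto
          then have "ereal (hv + \<alpha> * d - \<alpha> * (t/2)) \<le> ereal (hv + \<mu>)" using at2 alT by simp
          also have "\<dots> \<le> H x y" using mu(2) False d_def by auto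
          finally show ?thesis .
        qed
      qed
      then show "ereal (hv + fst (\<alpha>, - \<alpha> * (t/2)) * norm (y - v) + snd (\<alpha>, - \<alpha> * (t/2))) \<le> H x y"
        by (simp add: d_def)
    qed
    from psi_upper[OF this, of t] have le: "ereal (\<alpha> * t + - \<alpha> * (t/2)) \<le> psi t" by simp
    have "\<alpha> * t + - \<alpha> * (t/2) = \<alpha> * t / 2" by (simp add: field_simps)
    moreover have "0 < \<alpha> * t / 2" using al t by simp
    ultimately have "ereal 0 < ereal (\<alpha> * t + - \<alpha> * (t/2))" by simp
    then have "ereal 0 < psi t" by (rule less_le_trans[OF _ le])
    then show ?thesis by (simp add: zero_ereal_def)
  qed
  have conv: "psi (\<theta> * a + (1 - \<theta>) * b) \<le> ereal \<theta> * psi a + ereal (1 - \<theta>) * psi b"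
    if th: "\<theta> \<in> {0..1}" for a b \<theta>
    unfolding psi_eq[of "\<theta> * a + (1 - \<theta>) * b"]
  proof (rule SUP_least)
    fix p assume p: "p \<in> Adm"
    have "ereal (fst p * (\<theta> * a + (1 - \<theta>) * b) + snd p)
        = ereal \<theta> * ereal (fst p * a + snd p) + ereal (1 - \<theta>) * ereal (fst p * b + snd p)"
      by (simp add: algebra_simps)
    also have "\<dots> \<le> ereal \<theta> * psi a + ereal (1 - \<theta>) * psi b"
      using th by (intro add_mono ereal_mult_left_mono psi_upper[OF p]) auto
    finally show "ereal (fst p * (\<theta> * a + (1 - \<theta>) * b) + snd p) \<le> ereal \<theta> * psi a + ereal (1 - \<theta>) * psi b" .
  qed
  have lscpsi: "psi t \<le> Liminf (at t within {0..}) psi" for t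
    unfolding le_Liminf_iff
  proof (intro allI impI)
    fix c assume c: "c < psi t"
    then obtain p where p: "p \<in> Adm" "c < ereal (fst p * t + snd p)" by (auto simp: psi_eq less_SUP_iff)
    have "((\<lambda>s. ereal (fst p * s + snd p)) \<longlongrightarrow> ereal (fst p * t + snd p)) (at t within {0..})"
      by (intro tendsto_intros)
    then have "\<forall>\<^sub>F s in at t within {0..}. c < ereal (fst p * s + snd p)"
      using p(2) by (rule order_tendstoD(1))
    then show "\<forall>\<^sub>F s in at t within {0..}. c < psi s"
      by (rule eventually_mono) (erule less_le_trans[OF _ psi_upper[OF p(1)]])
  qed
  have iff: "psi t = 0 \<longleftrightarrow> t = 0" if "t \<ge> 0" for t
  proof
    assume "psi t = 0" then show "t = 0" using psi_pos[of t] that by (cases "t = 0") auto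
  next
    assume "t = 0" then show "psi t = 0" using psi0 by simp
  qed
  have G0: "Gamma0 psi" unfolding Gamma0_def
  proof (intro conjI)
    show "\<forall>t\<ge>0. 0 \<le> psi t" using psi_ge by simp
    show "\<forall>t\<ge>0. (psi t = 0) = (t = 0)" using iff by simp
    show "\<forall>a\<ge>0. \<forall>b\<ge>0. \<forall>\<theta>\<in>{0..1}.
        psi (\<theta> * a + (1 - \<theta>) * b) \<le> ereal \<theta> * psi a + ereal (1 - \<theta>) * psi b"
      by (intro allI impI ballI conv)
    show "\<forall>t\<ge>0. psi t \<le> Liminf (at t within {0..}) psi" using lscpsi by simp
  qed
  have ineq: "G v + ereal (inner (y - v) x) + psi (norm (y - v)) \<le> G y" for y
  proof (cases y rule: f_cases)
    case inf then show ?thesis by (simp add: G_inf)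
  next
    case fin
    define hy where "hy = lam * fr y + norm y^2/2 - inner x y"
    have Hy: "H x y = ereal hy" using fin by (simp add: H_fin hy_def)
    have "psi (norm (y - v)) \<le> ereal (hy - hv)"
      unfolding psi_eq
    proof (rule SUP_least)
      fix p assume "p \<in> Adm"
      then have A: "\<forall>y. ereal (hv + fst p * norm (y - v) + snd p) \<le> H x y" by (simp add: Adm_def)
      have "ereal (hv + fst p * norm (y - v) + snd p) \<le> H x y" using A by blast
      then show "ereal (fst p * norm (y - v) + snd p) \<le> ereal (hy - hv)" using Hy by simp
    qed
    then have "G v + ereal (inner (y - v) x) + psi (norm (y - v)) \<le> G v + ereal (inner (y - v) x) + ereal (hy - hv)"
      by (rule add_left_mono)
    also have iv: "inner (y - v) x = inner x y - inner x v" by (metis inner_commute inner_diff_right)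
    have "G v + ereal (inner (y - v) x) + ereal (hy - hv) = G y"
      using fv fin by (simp add: G_fin hy_def hv_def iv)
    finally show ?thesis .
  qed
  have dom: "v \<in> edom G" using fv by (simp add: edom_def G_fin)
  show ?thesis unfolding ess_strongly_convex_at_def using dom G0 ineq by blast
qed

lemma moreau_eq: "real_of_ereal (moreau_env lam f z) = (norm z ^ 2 / 2 - phi z) / lam"
proof -
  obtain u where u: "u \<in> Pm z" using Pm_ne by blast
  have fu: "f u = ereal (fr u)" by (rule Pm_fin[OF u])
  have up: "u \<in> prox_map lam f z" using u prox_eq by simp
  have "moreau_env lam f z = f u + ereal (norm (u - z) ^ 2 / (2 * lam))"
    unfolding moreau_env_def
  proof (rule antisym)
    show "(INF y. f y + ereal (norm (y - z) ^ 2 / (2 * lam))) \<le> f u + ereal (norm (u - z) ^ 2 / (2 * lam))"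
      by (rule INF_lower) simp
    show "f u + ereal (norm (u - z) ^ 2 / (2 * lam)) \<le> (INF y. f y + ereal (norm (y - z) ^ 2 / (2 * lam)))"
      using up by (intro INF_greatest) (simp add: prox_map_def)
  qed
  then have "real_of_ereal (moreau_env lam f z) = fr u + norm (u - z) ^ 2 / (2 * lam)" using fu by simp
  also have "\<dots> = (norm z ^ 2 / 2 - phi z) / lam"
    using phi_eq[OF u] lam_pos by (simp add: norm_diff_sq field_simps)
  finally show ?thesis .
qed

end

theorem mainTheorem9:
  fixes f :: "'a::euclidean_space \<Rightarrow> ereal" and lam :: real and x :: 'a
  assumes "proper_fun f" and "lsc f" and "prox_bounded f"
    and "prox_threshold f > 0"
    and "0 < lam" and "ereal lam < prox_threshold f"
    and "x \<in> edom f"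
  defines "g \<equiv> (\<lambda>y. ereal lam * f y + jfun y)"
  shows "((\<exists>p. prox_map lam f x = {p})
            \<longleftrightarrow> strictly_differentiable (\<lambda>z. real_of_ereal (moreau_env lam f z)) x)
       \<and> ((\<exists>p. prox_map lam f x = {p})
            \<longleftrightarrow> (\<lambda>z. real_of_ereal (fconj g z)) differentiable (at x))
       \<and> ((\<exists>p. prox_map lam f x = {p})
            \<longleftrightarrow> strictly_differentiable (\<lambda>z. real_of_ereal (fconj g z)) x)
       \<and> ((\<exists>p. prox_map lam f x = {p})
            \<longleftrightarrow> (\<exists>u\<in>prox_map lam f x. ess_strongly_convex_at g u x))
       \<and> ((\<exists>p. prox_map lam f x = {p}) \<longrightarrow>
            (\<exists>v. prox_map lam f x = {v}
                 \<and> ((\<lambda>z. real_of_ereal (fconj g z)) has_derivative (\<lambda>h. inner v h)) (at x)))"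
proof -
  interpret proxsetup f lam
    by unfold_locales (use assms in auto)
  have gG: "g = G" unfolding g_def G_def by simp
  have pm: "prox_map lam f x = Pm x" by (rule prox_eq)
  have ph: "(\<lambda>z. real_of_ereal (fconj g z)) = phi" by (rule ext) (simp add: gG phi_def)
  define S where "S = (\<exists>p. Pm x = {p})"
  have menv: "(\<lambda>z. real_of_ereal (moreau_env lam f z)) = (\<lambda>z. (1/lam) * (norm z ^ 2 / 2) + (- 1/lam) * phi z)"
    by (rule ext) (use lam_pos in \<open>simp add: moreau_eq field_simps\<close>)
  have phi_from_e: "phi = (\<lambda>z. 1 * (norm z ^ 2 / 2) + (- lam) * real_of_ereal (moreau_env lam f z))"
    by (rule ext) (use lam_pos in \<open>simp add: moreau_eq field_simps\<close>)
  have S_sd: "\<exists>v. Pm x = {v} \<and> sd phi (\<lambda>h. inner v h) x" if S using strict_phi that S_def by blast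
  have c3: "S \<longleftrightarrow> strictly_differentiable phi x"
  proof
    assume S then show "strictly_differentiable phi x" using S_sd strict_sd by blast
  next
    assume "strictly_differentiable phi x"
    then obtain D where "sd phi D x" by (auto simp: strict_sd)
    then have "phi differentiable (at x)" using sd_has_derivative differentiable_def by blast
    then show S using diff_single S_def by simp
  qed
  have c2: "S \<longleftrightarrow> phi differentiable (at x)"
  proof
    assume S then show "phi differentiable (at x)" using S_sd sd_has_derivative differentiable_def by blast
  next
    assume "phi differentiable (at x)" then show S using diff_single S_def by simp
  qed
  have c1: "S \<longleftrightarrow> strictly_differentiable (\<lambda>z. real_of_ereal (moreau_env lam f z)) x"
  proof
    assume S
    then obtain v where "sd phi (\<lambda>h. inner v h) x" using S_sd by blast
    then have "sd (\<lambda>z. (1/lam) * (norm z ^ 2 / 2) + (- 1/lam) * phi z) (\<lambda>h. (1/lam) * inner x h + (-1/lam) * inner v h) x"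
      by (intro sd_lin sd_j)
    then show "strictly_differentiable (\<lambda>z. real_of_ereal (moreau_env lam f z)) x"
      unfolding menv strict_sd by blast
  next
    assume "strictly_differentiable (\<lambda>z. real_of_ereal (moreau_env lam f z)) x"
    then obtain D where D: "sd (\<lambda>z. real_of_ereal (moreau_env lam f z)) D x" by (auto simp: strict_sd)
    have "sd (\<lambda>z. 1 * (norm z ^ 2 / 2) + (- lam) * real_of_ereal (moreau_env lam f z)) (\<lambda>h. 1 * inner x h + (- lam) * D h) x"
      by (intro sd_lin sd_j D)
    then have "sd phi (\<lambda>h. 1 * inner x h + (- lam) * D h) x" using phi_from_e by simp
    then show S using c3 strict_sd by blast
  qed
  have c4: "S \<longleftrightarrow> (\<exists>u\<in>Pm x. ess_strongly_convex_at G u x)"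
  proof
    assume S then obtain v where "Pm x = {v}" by (auto simp: S_def)
    then show "\<exists>u\<in>Pm x. ess_strongly_convex_at G u x" using single_esc by blast
  next
    assume "\<exists>u\<in>Pm x. ess_strongly_convex_at G u x" then show S using esc_single S_def by blast
  qed
  have c5: "S \<longrightarrow> (\<exists>v. Pm x = {v} \<and> (phi has_derivative (\<lambda>h. inner v h)) (at x))"
    using S_sd sd_has_derivative by blast
  show ?thesis unfolding pm ph gG[symmetric] using c1 c2 c3 c4 c5 unfolding S_def gG by blast
qed


end
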